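(* There exists $N_0$ such that for all $N\ge N_0$ and all $z,\bar z\in U(N)$ there exists $T_0\in\mathbb R$ with $|T_0|<N\log^6N$ and $d_H(K_{T_0}(\bar z),z)\le1/N$.
   Context: Kochergin flow setting: $\gamma=\frac12-\eta$ with $0<\eta<\frac12$. $f\in C^2((0,1))$, $f>0$, $f''>0$, $\int_0^1f=1$, $\lim_{x\to0^+}f(x)x^{\gamma}=M_1$, $\lim_{x\to1^-}f(x)(1-x)^{\gamma}=M_2$, $\lim_{x\to0^+}f'(x)x^{\gamma+1}=-M_3$, $\lim_{x\to1^-}f'(x)(1-x)^{\gamma+1}=M_4$ with $M_i\in(0,1)$. $\alpha\in(0,1)$ is irrational and the denominators $q_n$ of its continued fraction convergents satisfy $q_{n+1}\le q_n\log^2q_n$ for all sufficiently large $n$. Identify $[0,1)\cong\mathbb R/\mathbb Z$; $\|\cdot\|$ is the distance to the nearest integer. $M=\{(a,b):a\in[0,1),0\le b<f(a)\}$. $K_t$ is the special flow over $a\mapsto a+\alpha$ under $f$: $K_t(a,b)=(a+n\alpha,b+t-S_nf(a))$, $n=N((a,b),t)$ the unique integer with $S_nf(a)\le b+t<S_{n+1}f(a)$, where $S_nf(a)=\sum_{i=0}^{n-1}f(a+i\alpha)$ ($n>0$), $S_0f=0$, $S_nf(a)=-\sum_{i=1}^{-n}f(a-i\alpha)$ ($n<0$). For $z=(a,b),\bar z=(\bar a,\bar b)\in M$: $d_H(z,\bar z)=\|a-\bar a\|$. Logarithms are natural. $U(N)=\{z=(z_1,z_2)\in M:\ \|n\alpha+z_1\|\ge1/(N\log^3N)\text{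 for all integers }|n|\le N\log^2N\}$. *)

theory Defs
  imports "HOL-Analysis.Analysis"
begin

fun cf_rem :: "real \<Rightarrow> nat \<Rightarrow> real" where
  "cf_rem x 0 = x"
| "cf_rem x (Suc n) = 1 / frac (cf_rem x n)"

definition cf_a :: "real \<Rightarrow> nat \<Rightarrow> nat" where
  "cf_a x n = nat \<lfloor>cf_rem x n\<rfloor>"

fun cf_q :: "real \<Rightarrow> nat \<Rightarrow> nat" where
  "cf_q x 0 = 1"
| "cf_q x (Suc 0) = cf_a x 1"
| "cf_q x (Suc (Suc n)) = cf_a x (Suc (Suc n)) * cf_q x (Suc n) + cf_q x n"

definition dnint :: "real \<Rightarrow> real" where
  "dnint x = \<bar>x - of_int (round x)\<bar>"

text \<open>Birkhoff sums S_n f(a) over the rotation a \<mapsto> a + alpha on [0,1) = R/Z.\<close>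
definition birk :: "(real \<Rightarrow> real) \<Rightarrow> real \<Rightarrow> int \<Rightarrow> real \<Rightarrow> real" where
  "birk f \<alpha> n a =
     (if n \<ge> 0 then (\<Sum>i<nat n. f (frac (a + real i * \<alpha>)))
      else - (\<Sum>i\<in>{1..nat (- n)}. f (frac (a - real i * \<alpha>))))"

definition flow_space :: "(real \<Rightarrow> real) \<Rightarrow> (real \<times> real) set" where
  "flow_space f = {(a, b). 0 \<le> a \<and> a < 1 \<and> 0 \<le> b \<and> b < f a}"

definition flow_N :: "(real \<Rightarrow> real) \<Rightarrow> real \<Rightarrow> real \<times> real \<Rightarrow> real \<Rightarrow> int" where
  "flow_N f \<alpha> z t = (THE n. birk f \<alpha> n (fst z) \<le> snd z + t \<and> snd z + t < birk f \<alpha> (n + 1) (fst z))"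

definition spflow :: "(real \<Rightarrow> real) \<Rightarrow> real \<Rightarrow> real \<Rightarrow> real \<times> real \<Rightarrow> real \<times> real" where
  "spflow f \<alpha> t z = (let n = flow_N f \<alpha> z t in
      (frac (fst z + of_int n * \<alpha>), snd z + t - birk f \<alpha> n (fst z)))"

definition dH :: "real \<times> real \<Rightarrow> real \<times> real \<Rightarrow> real" where
  "dH z w = dnint (fst z - fst w)"

definition U_set :: "(real \<Rightarrow> real) \<Rightarrow> real \<Rightarrow> nat \<Rightarrow> (real \<times> real) set" where
  "U_set f \<alpha> N = {z \<in> flow_space f. \<forall>n::int. real_of_int \<bar>n\<bar> \<le> real N * (ln (real N))^2 \<longrightarrow>
       dnint (of_int n * \<alpha> + fst z) \<ge> 1 / (real N * (ln (real N))^3)}"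

end

theory Submission
  imports Defs
begin

lemma dnint_le: "dnint x \<le> \<bar>x - of_int m\<bar>"
  unfolding dnint_def by (rule round_diff_minimal)

lemma dnint_nonneg: "dnint x \<ge> 0"
  unfolding dnint_def by simp

lemma dnint_lip: "dnint x \<le> dnint y + \<bar>x - y\<bar>"
proof -
  have "dnint x \<le> \<bar>x - of_int (round y)\<bar>" by (rule dnint_le)
  also have "\<dots> \<le> \<bar>y - of_int (round y)\<bar> + \<bar>x - y\<bar>" by simp
  finally show ?thesis unfolding dnint_def by simp
qed

lemma dnint_shift: "dnint (x + of_int m) = dnint x"
proof (rule antisym)
  have "dnint (x + of_int m) \<le> \<bar>x + of_int m - of_int (round x + m)\<bar>" by (rule dnint_le)
  then show "dnint (x + of_int m) \<le> dnint x" unfolding dnint_def by simp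
  have "dnint x \<le> \<bar>x - of_int (round (x + of_int m) - m)\<bar>" by (rule dnint_le)
  then show "dnint x \<le> dnint (x + of_int m)" unfolding dnint_def by (simp add: algebra_simps)
qed

lemma dnint_frac: "dnint (frac x - t) = dnint (x - t)"
proof -
  have "frac x - t = (x - t) + of_int (- \<lfloor>x\<rfloor>)" by (simp add: frac_def)
  then show ?thesis using dnint_shift by metis
qed

lemma dnint_01: assumes "0 \<le> x" "x \<le> 1" shows "dnint x \<ge> min x (1 - x)"
proof -
  have "\<bar>x - of_int (round x)\<bar> \<ge> min x (1 - x)"
  proof (cases "round x \<le> 0")
    case True
    then have "(of_int (round x)::real) \<le> 0" by simp
    then show ?thesis using assms by linarith
  next
    case False
    then have "(of_int (round x)::real) \<ge> 1" by simp
    then show ?thesis using assms by linarith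
  qed
  then show ?thesis unfolding dnint_def .
qed

lemma dnint_le_x: "dnint x \<le> \<bar>x\<bar>" using dnint_le[of x 0] by simp
lemma dnint_le_1x: "dnint x \<le> \<bar>x - 1\<bar>" using dnint_le[of x 1] by simp


declare cf_rem.simps(2)[simp del]

fun cf_p :: "real \<Rightarrow> nat \<Rightarrow> nat" where
  "cf_p x 0 = 0"
| "cf_p x (Suc 0) = 1"
| "cf_p x (Suc (Suc n)) = cf_a x (Suc (Suc n)) * cf_p x (Suc n) + cf_p x n"

locale cfl =
  fixes \<alpha> :: real
  assumes a0: "0 < \<alpha>" and a1: "\<alpha> < 1" and airr: "\<alpha> \<notin> \<rat>"
begin

abbreviation "r \<equiv> cf_rem \<alpha>"
abbreviation "q \<equiv> cf_q \<alpha>"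
abbreviation "p \<equiv> cf_p \<alpha>"
abbreviation "a \<equiv> cf_a \<alpha>"
definition "e k = real (q k) * \<alpha> - real (p k)"

lemma r_irr: "r k \<notin> \<rat>"
proof (induction k)
  case 0 then show ?case using airr by simp
next
  case (Suc k)
  have "frac (r k) \<notin> \<rat>"
  proof
    assume "frac (r k) \<in> \<rat>"
    then have "frac (r k) + of_int \<lfloor>r k\<rfloor> \<in> \<rat>" by simp
    then show False using Suc by (simp add: frac_def)
  qed
  then have "1 / frac (r k) \<notin> \<rat>"
    by (metis Rats_inverse inverse_eq_divide inverse_inverse_eq)
  then show ?case by (simp add: cf_rem.simps(2))
qed

lemma frac_r_pos: "0 < frac (r k)"
proof -
  have "frac (r k) \<noteq> 0" using r_irr[of k] by (metis Ints_cases Rats_of_int frac_eq_0_iff)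
  then show ?thesis using frac_ge_0[of "r k"] by linarith
qed

lemma r_gt1: "r (Suc k) > 1"
  using frac_r_pos[of k] frac_lt_1[of "r k"] by (simp add: field_simps cf_rem.simps(2))

lemma r_pos: "r k > 0"
proof (cases k)
  case 0 then show ?thesis using a0 by simp
next
  case (Suc m) then show ?thesis using r_gt1[of m] by simp
qed

lemma a_eq: "real (a k) = of_int \<lfloor>r k\<rfloor>"
  using r_pos[of k] unfolding cf_a_def by simp

lemma a_ge1: "a (Suc k) \<ge> 1"
proof -
  have "of_int \<lfloor>r (Suc k)\<rfloor> \<ge> (1::real)" using r_gt1[of k] by simp
  then show ?thesis using a_eq[of "Suc k"] by linarith
qed

lemma r_rec: "r (Suc k) = 1 / (r k - real (a k))"
  using a_eq[of k] by (simp add: frac_def cf_rem.simps(2))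

lemma q_pos: "q k \<ge> 1"
proof -
  have "q k \<ge> 1 \<and> q (Suc k) \<ge> 1"
  proof (induction k)
    case 0 then show ?case using a_ge1[of 0] by simp
  next
    case (Suc k)
    have "q (Suc (Suc k)) = a (Suc (Suc k)) * q (Suc k) + q k" by simp
    then show ?case using Suc by simp
  qed
  then show ?thesis by simp
qed

lemma q_Suc_mono: "q k \<le> q (Suc k)"
proof (cases k)
  case 0 then show ?thesis using a_ge1[of 0] by simp
next
  case (Suc m)
  have "q (Suc (Suc m)) = a (Suc (Suc m)) * q (Suc m) + q m" by simp
  also have "\<dots> \<ge> q (Suc m)" using a_ge1[of "Suc m"]
    by (metis le_add1 le_trans mult_1 mult_le_mono1)
  finally show ?thesis using Suc by simp
qed

lemma q_mono: "mono q"
  using q_Suc_mono by (simp add: mono_iff_le_Suc)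

lemma q_ge: "q k \<ge> k"
proof (induction k rule: nat_less_induct)
  case (1 n)
  show ?case
  proof (cases n)
    case 0 then show ?thesis by simp
  next
    case (Suc m)
    show ?thesis
    proof (cases m)
      case 0 then show ?thesis using Suc q_pos[of 1] by simp
    next
      case (Suc l)
      have "q (Suc (Suc l)) = a (Suc (Suc l)) * q (Suc l) + q l" by simp
      also have "\<dots> \<ge> q (Suc l) + 1" using a_ge1[of "Suc l"] q_pos[of l]
        by (metis add_le_mono mult_le_mono1 mult_1)
      finally show ?thesis using 1 \<open>n = Suc m\<close> Suc by (metis Suc_le_mono le_trans lessI less_Suc_eq Suc_eq_plus1)
    qed
  qed
qed

lemma e_rec: "e (Suc (Suc k)) = real (a (Suc (Suc k))) * e (Suc k) + e k"
  unfolding e_def by (simp add: algebra_simps)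

lemma e_rel: "e k = - r (Suc (Suc k)) * e (Suc k)"
proof (induction k)
  case 0
  have ne: "1 - real (a 1) * \<alpha> \<noteq> 0"
  proof
    assume "1 - real (a 1) * \<alpha> = 0"
    then have "\<alpha> = 1 / real (a 1)" using a_ge1[of 0] by (simp add: field_simps)
    then show False using airr by (metis Rats_1 Rats_divide Rats_of_nat)
  qed
  have r1: "r 1 = 1 / \<alpha>" using a0 a1 by (simp add: frac_eq cf_rem.simps(2))
  have "r 2 = 1 / (1/\<alpha> - real (a 1))" using r_rec[of 1] r1 by (simp add: numeral_2_eq_2)
  also have "\<dots> = \<alpha> / (1 - real (a 1) * \<alpha>)" using a0 by (simp add: field_simps)
  finally have r2: "r 2 = \<alpha> / (1 - real (a 1) * \<alpha>)" .
  have e0: "e 0 = \<alpha>" and e1: "e 1 = real (a 1) * \<alpha> - 1" unfolding e_def by simp_all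
  have "- r 2 * e 1 = (\<alpha> / (1 - real (a 1) * \<alpha>)) * (1 - real (a 1) * \<alpha>)"
    unfolding r2 e1 by (simp only: mult_minus_left mult_minus_right[symmetric] minus_diff_eq)
  also have "\<dots> = \<alpha>" using ne by simp
  finally show ?case using e0 by (simp add: numeral_2_eq_2)
next
  case (Suc k)
  have fr: "frac (r (Suc (Suc k))) = r (Suc (Suc k)) - real (a (Suc (Suc k)))"
    using a_eq by (simp add: frac_def)
  have "e (Suc (Suc k)) = e (Suc k) * (real (a (Suc (Suc k))) - r (Suc (Suc k)))"
    using e_rec[of k] Suc by (simp add: algebra_simps)
  also have "\<dots> = - e (Suc k) * frac (r (Suc (Suc k)))" unfolding fr by (simp add: algebra_simps)
  finally have "e (Suc (Suc k)) = - e (Suc k) * frac (r (Suc (Suc k)))" .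
  moreover have "r (Suc (Suc (Suc k))) = 1 / frac (r (Suc (Suc k)))" by (simp add: cf_rem.simps(2))
  ultimately show ?case using frac_r_pos[of "Suc (Suc k)"] by (simp add: field_simps)
qed

lemma det: "int (p (Suc k)) * int (q k) - int (p k) * int (q (Suc k)) = (-1) ^ k"
proof (induction k)
  case 0 then show ?case by simp
next
  case (Suc k)
  have "int (p (Suc (Suc k))) * int (q (Suc k)) - int (p (Suc k)) * int (q (Suc (Suc k)))
     = - (int (p (Suc k)) * int (q k) - int (p k) * int (q (Suc k)))"
    by (simp add: algebra_simps)
  then show ?case using Suc by simp
qed

lemma coprime_pq: "coprime (p k) (q k)"
proof -
  have "coprime (int (p k)) (int (q k))"
  proof (rule coprimeI)
    fix c assume "c dvd int (p k)" "c dvd int (q k)"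
    then have "c dvd int (p (Suc k)) * int (q k) - int (p k) * int (q (Suc k))" by simp
    then have "c dvd (-1) ^ k" using det by simp
    moreover have "is_unit ((-1::int) ^ k)" by simp
    ultimately show "is_unit c" using dvd_unit_imp_unit by blast
  qed
  then show ?thesis by simp
qed

lemma e_bound: "\<bar>e k\<bar> < 1 / real (q (Suc k))"
proof -
  have id: "real (q (Suc k)) * e k - real (q k) * e (Suc k) = (-1) ^ k"
  proof -
    have "real (q (Suc k)) * e k - real (q k) * e (Suc k) = real (p (Suc k)) * real (q k) - real (p k) * real (q (Suc k))"
      unfolding e_def by (simp add: algebra_simps)
    also have "\<dots> = of_int (int (p (Suc k)) * int (q k) - int (p k) * int (q (Suc k)))" by simp
    also have "\<dots> = (-1) ^ k" using det[of k] by simp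
    finally show ?thesis .
  qed
  define R where "R = r (Suc (Suc k))"
  have Rpos: "R > 0" using r_pos unfolding R_def by blast
  have "e (Suc k) = - e k / R" using e_rel[of k] Rpos R_def by (simp add: field_simps)
  then have "e k * (real (q (Suc k)) + real (q k) / R) = (-1) ^ k" using id by (simp add: field_simps)
  then have "\<bar>e k * (real (q (Suc k)) + real (q k) / R)\<bar> = 1" by simp
  moreover have "real (q (Suc k)) + real (q k) / R > 0" proof -
    have "real (q (Suc k)) > 0" using q_pos[of "Suc k"] by linarith
    moreover have "real (q k) / R \<ge> 0" using Rpos by simp
    ultimately show ?thesis by linarith
  qed
  ultimately have "\<bar>e k\<bar> * (real (q (Suc k)) + real (q k) / R) = 1" by (simp add: abs_mult)
  moreover have "real (q k) / R > 0" using q_pos[of k] Rpos by simp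
  moreover have "real (q (Suc k)) > 0" using q_pos[of "Suc k"] by simp
  ultimately have eq: "\<bar>e k\<bar> * real (q (Suc k)) + \<bar>e k\<bar> * (real (q k) / R) = 1"
    by (simp add: distrib_left)
  have "\<bar>e k\<bar> \<noteq> 0" using eq by auto
  then have "\<bar>e k\<bar> * (real (q k) / R) > 0" using \<open>real (q k) / R > 0\<close> by (simp del: times_divide_eq_right)
  then have "\<bar>e k\<bar> * real (q (Suc k)) < 1" using eq by linarith
  then show ?thesis using q_pos[of "Suc k"] by (simp add: less_divide_eq)
qed

end

lemma sqrt_step: fixes Q :: real assumes "Q \<ge> 0"
  shows "1 / sqrt (Q + 1) \<le> 2 * (sqrt (Q + 1) - sqrt Q)"
proof -
  define s where "s = sqrt Q"
  define t where "t = sqrt (Q + 1)"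
  have s0: "s \<ge> 0" and t0: "t > 0" using assms by (auto simp: s_def t_def)
  have ss: "s * s = Q" and tt: "t * t = Q + 1" using assms by (auto simp: s_def t_def)
  have "(2 * t * s) ^ 2 = 4 * (t * t) * (s * s)" by (simp add: power2_eq_square algebra_simps)
  also have "\<dots> = 4 * (Q + 1) * Q" by (simp only: tt ss)
  also have "\<dots> \<le> (2 * Q + 1) ^ 2" by (simp add: power2_eq_square algebra_simps)
  finally have "(2 * t * s) ^ 2 \<le> (2 * Q + 1) ^ 2" .
  then have "2 * t * s \<le> 2 * Q + 1"
    by (rule power2_le_imp_le) (use assms in linarith)
  then have "1 \<le> 2 * (t * t) - 2 * t * s" using tt by linarith
  then have "1 \<le> t * (2 * (t - s))" by (simp add: algebra_simps)
  then show ?thesis using t0 unfolding s_def[symmetric] t_def[symmetric] by (simp add: divide_le_eq mult.commute)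
qed

lemma inv_sqrt_mono: "0 < (x::real) \<Longrightarrow> x \<le> y \<Longrightarrow> 1 / sqrt y \<le> 1 / sqrt x"
  by (simp add: frac_le)

lemma sqrt_div_helper: "0 < (q::real) \<Longrightarrow> 0 < Q \<Longrightarrow> 1 / sqrt (Q / q) = sqrt q * (1 / sqrt Q)"
  by (simp add: real_sqrt_divide)

definition phi :: "real \<Rightarrow> nat \<Rightarrow> nat \<Rightarrow> real" where
  "phi \<delta> q j = 1 / sqrt (max \<delta> ((real j - 2) / real q))"

lemma phi_nonneg: "\<delta> > 0 \<Longrightarrow> phi \<delta> q j \<ge> 0"
  unfolding phi_def by simp

lemma phi_sum: assumes "\<delta> > 0" "q > 0"
  shows "(\<Sum>j\<le>Q+2. phi \<delta> q j) \<le> 3 / sqrt \<delta> + 2 * sqrt (real q) * sqrt (real Q)"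
proof (induction Q)
  case 0
  have "phi \<delta> q j = 1 / sqrt \<delta>" if "j \<le> 2" for j
  proof -
    have "(real j - 2) / real q \<le> 0" using that assms by (simp add: divide_nonpos_pos)
    then show ?thesis unfolding phi_def using assms by (simp add: max_def)
  qed
  then have "(\<Sum>j\<le>0+2. phi \<delta> q j) = (\<Sum>j\<le>(2::nat). 1 / sqrt \<delta>)" by simp
  also have "\<dots> = 3 / sqrt \<delta>" by simp
  finally show ?case by simp
next
  case (Suc Q)
  have "phi \<delta> q (Suc Q + 2) = 1 / sqrt (max \<delta> ((real Q + 1) / real q))"
    unfolding phi_def by (simp add: add.commute)
  also have "\<dots> \<le> 1 / sqrt ((real Q + 1) / real q)"
    by (rule inv_sqrt_mono) (use assms in auto)
  also have "\<dots> = sqrt (real q) * (1 / sqrt (real Q + 1))"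
    by (rule sqrt_div_helper) (use assms in auto)
  also have "\<dots> \<le> sqrt (real q) * (2 * (sqrt (real Q + 1) - sqrt (real Q)))"
    by (rule mult_left_mono[OF sqrt_step]) simp_all
  finally have st: "phi \<delta> q (Suc Q + 2) \<le> sqrt (real q) * (2 * (sqrt (real Q + 1) - sqrt (real Q)))" .
  have "(\<Sum>j\<le>Suc Q+2. phi \<delta> q j) = (\<Sum>j\<le>Q+2. phi \<delta> q j) + phi \<delta> q (Suc Q + 2)"
    by simp
  also have "\<dots> \<le> 3 / sqrt \<delta> + 2 * sqrt (real q) * sqrt (real Q) + sqrt (real q) * (2 * (sqrt (real Q + 1) - sqrt (real Q)))"
    using Suc st by linarith
  also have "\<dots> = 3 / sqrt \<delta> + 2 * sqrt (real q) * sqrt (real (Suc Q))"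
    by (simp add: algebra_simps)
  finally show ?case .
qed

lemma lin5: "(s::real) \<le> t \<Longrightarrow> t = u + v \<Longrightarrow> u \<le> w \<Longrightarrow> v = v' \<Longrightarrow> v' \<le> w
   \<Longrightarrow> w \<le> 3 / x + 2 * y \<Longrightarrow> s \<le> 6 / x + 4 * y"
  by linarith

lemma g_sum: assumes "\<delta> > 0" "q > 0"
  shows "(\<Sum>J<q. 1 / sqrt (max \<delta> ((min (real J) (real q - real J) - 2) / real q)))
         \<le> 6 / sqrt \<delta> + 4 * real q"
proof -
  have S: "(\<Sum>j\<le>q+2. phi \<delta> q j) \<le> 3 / sqrt \<delta> + 2 * real q"
    proof -
    have "2 * sqrt (real q) * sqrt (real q) = 2 * real q" by (simp add: mult.assoc)
    then show ?thesis using phi_sum[OF assms, of q] by linarith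
  qed
  have pt: "1 / sqrt (max \<delta> ((min (real J) (real q - real J) - 2) / real q)) \<le> phi \<delta> q J + phi \<delta> q (q - J)"
    if "J < q" for J
  proof (cases "real J \<le> real q - real J")
    case True
    then have "1 / sqrt (max \<delta> ((min (real J) (real q - real J) - 2) / real q)) = phi \<delta> q J"
      unfolding phi_def by simp
    then show ?thesis using phi_nonneg[OF assms(1), of q "q - J"] by linarith
  next
    case False
    then have "1 / sqrt (max \<delta> ((min (real J) (real q - real J) - 2) / real q)) = phi \<delta> q (q - J)"
      unfolding phi_def using that by (simp add: of_nat_diff)
    then show ?thesis using phi_nonneg[OF assms(1), of q J] by linarith
  qed
  have s1: "(\<Sum>J<q. 1 / sqrt (max \<delta> ((min (real J) (real q - real J) - 2) / real q)))
      \<le> (\<Sum>J<q. phi \<delta> q J + phi \<delta> q (q - J))"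
    by (rule sum_mono) (use pt in auto)
  have s2: "(\<Sum>J<q. phi \<delta> q J + phi \<delta> q (q - J)) = (\<Sum>J<q. phi \<delta> q J) + (\<Sum>J<q. phi \<delta> q (q - J))"
    by (simp add: sum.distrib)
  have s3: "(\<Sum>J<q. phi \<delta> q J) \<le> (\<Sum>j\<le>q+2. phi \<delta> q j)"
    by (rule sum_mono2) (auto simp: phi_nonneg[OF assms(1)])
  have s4: "(\<Sum>J<q. phi \<delta> q (q - J)) = (\<Sum>j\<in>(\<lambda>J. q - J) ` {..<q}. phi \<delta> q j)"
    by (subst sum.reindex) (auto simp: inj_on_def)
  have s5: "(\<Sum>j\<in>(\<lambda>J. q - J) ` {..<q}. phi \<delta> q j) \<le> (\<Sum>j\<le>q+2. phi \<delta> q j)"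
    by (rule sum_mono2) (auto simp: phi_nonneg[OF assms(1)])
  show ?thesis by (rule lin5[OF s1 s2 s3 s4 s5 S])
qed

lemma perm_bij: assumes "coprime p q" "q > (0::nat)"
  shows "bij_betw (\<lambda>i. nat ((A + int i * int p) mod int q)) {..<q} {..<q}"
proof -
  let ?h = "\<lambda>i. nat ((A + int i * int p) mod int q)"
  have inj: "inj_on ?h {..<q}"
  proof (rule inj_onI)
    fix i j assume i: "i \<in> {..<q}" and j: "j \<in> {..<q}" and h: "?h i = ?h j"
    have "(A + int i * int p) mod int q = (A + int j * int p) mod int q"
      using h assms by (simp add: nat_eq_iff)
    then have "int q dvd (A + int i * int p) - (A + int j * int p)"
      by (simp add: mod_eq_dvd_iff)
    then have "int q dvd (int i - int j) * int p" by (simp add: algebra_simps)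
    moreover have "coprime (int q) (int p)" using assms by (simp add: coprime_commute)
    ultimately have "int q dvd (int i - int j)" using coprime_dvd_mult_left_iff by blast
    moreover have "\<bar>int i - int j\<bar> < int q" using i j by auto
    ultimately have "int i - int j = 0"
    proof -
      assume d: "int q dvd int i - int j" and l: "\<bar>int i - int j\<bar> < int q"
      show ?thesis
      proof (rule ccontr)
        assume "int i - int j \<noteq> 0"
        then have "\<bar>int q\<bar> \<le> \<bar>int i - int j\<bar>" using d by (rule dvd_imp_le_int)
        then show False using l by simp
      qed
    qed
    then show "i = j" by simp
  qed
  have sub: "?h ` {..<q} \<subseteq> {..<q}"
  proof
    fix x assume "x \<in> ?h ` {..<q}"
    then obtain i where "x = ?h i" by auto
    moreover have "(A + int i * int p) mod int q < int q" "0 \<le> (A + int i * int p) mod int q" using assms by auto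
    ultimately show "x \<in> {..<q}" by auto
  qed
  have "?h ` {..<q} = {..<q}" using endo_inj_surj[OF _ sub inj] by simp
  then show ?thesis using inj by (simp add: bij_betw_def)
qed


lemma f_bound:
  fixes f :: "real \<Rightarrow> real" and g M1 M2 :: real
  assumes cont: "continuous_on {0<..<1} f"
    and g: "g \<le> 1/2"
    and lim1: "((\<lambda>x. f x * x powr g) \<longlongrightarrow> M1) (at_right 0)"
    and lim2: "((\<lambda>x. f x * (1 - x) powr g) \<longlongrightarrow> M2) (at_left 1)"
    and M: "M1 < 1" "M2 < 1"
  shows "\<exists>C\<ge>1. \<forall>x. 0 < x \<and> x < 1 \<longrightarrow> f x \<le> C / sqrt (dnint x)"
proof -
  have "\<forall>\<^sub>F x in at_right 0. f x * x powr g < 1" using order_tendstoD(2)[OF lim1 M(1)] .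
  then obtain b where b: "b > 0" and hb: "\<And>y. y > 0 \<Longrightarrow> y < b \<Longrightarrow> f y * y powr g < 1"
    unfolding eventually_at_right_field by blast
  have "\<forall>\<^sub>F x in at_left 1. f x * (1 - x) powr g < 1" using order_tendstoD(2)[OF lim2 M(2)] .
  then obtain b' where b': "b' < 1" and hb': "\<And>y. y > b' \<Longrightarrow> y < 1 \<Longrightarrow> f y * (1 - y) powr g < 1"
    unfolding eventually_at_left_field by blast
  define l where "l = min b (1/2)"
  define u where "u = max b' (1/2)"
  have lu: "0 < l" "l \<le> u" "u < 1" using b b' by (auto simp: l_def u_def)
  have "continuous_on {l..u} f" by (rule continuous_on_subset[OF cont]) (use lu in auto)
  then obtain xm where "xm \<in> {l..u}" and xm: "\<And>y. y \<in> {l..u} \<Longrightarrow> f y \<le> f xm"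
    using continuous_attains_sup[of "{l..u}" f] lu by auto
  define C where "C = max 1 (f xm)"
  have C1: "C \<ge> 1" by (simp add: C_def)
  have key: "f x \<le> C / sqrt (dnint x)" if x: "0 < x" "x < 1" for x
  proof -
    have dpos: "dnint x > 0"
    proof -
      have "dnint x \<ge> min x (1 - x)" using dnint_01[of x] x by simp
      then show ?thesis using x by linarith
    qed
    have d1: "dnint x \<le> x" using dnint_le_x[of x] x by simp
    have d2: "dnint x \<le> 1 - x" using dnint_le_1x[of x] x by simp
    have Cd: "1 / sqrt (dnint x) \<le> C / sqrt (dnint x)"
      using C1 dpos by (simp add: divide_right_mono)
    have "sqrt (dnint x) \<le> 1" using d1 x by simp
    then have Cd2: "C \<le> C / sqrt (dnint x)" using C1 dpos by (simp add: le_divide_eq)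
    show ?thesis
    proof (cases "x < b")
      case True
      have "f x * x powr g < 1" using hb x True by simp
      moreover have "x powr g \<ge> x powr (1/2)" using powr_mono'[of g "1/2" x] g x by simp
      moreover have "x powr (1/2) = sqrt x" using x by (simp add: powr_half_sqrt)
      moreover have "sqrt x > 0" using x by simp
      ultimately have "f x < 1 / sqrt x"
        by (smt (verit, best) divide_pos_pos le_divide_eq_1_pos mult_le_cancel_left_pos
            less_divide_eq mult_pos_pos not_le zero_le_mult_iff)
      also have "\<dots> \<le> 1 / sqrt (dnint x)" by (rule inv_sqrt_mono[OF dpos d1])
      finally show ?thesis using Cd by linarith
    next
      case False
      show ?thesis
      proof (cases "x > b'")
        case True
        have "f x * (1 - x) powr g < 1" using hb' x True by simp
        moreover have "(1 - x) powr g \<ge> (1 - x) powr (1/2)" using powr_mono'[of g "1/2" "1 - x"] g x by simp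
        moreover have "(1 - x) powr (1/2) = sqrt (1 - x)" using x by (simp add: powr_half_sqrt)
        moreover have "sqrt (1 - x) > 0" using x by simp
        ultimately have "f x < 1 / sqrt (1 - x)"
          by (smt (verit, best) divide_pos_pos le_divide_eq_1_pos mult_le_cancel_left_pos
              less_divide_eq mult_pos_pos not_le zero_le_mult_iff)
        also have "\<dots> \<le> 1 / sqrt (dnint x)" by (rule inv_sqrt_mono[OF dpos d2])
        finally show ?thesis using Cd by linarith
      next
        case False
        then have "x \<in> {l..u}" using \<open>\<not> x < b\<close> by (auto simp: l_def u_def)
        then have "f x \<le> f xm" by (rule xm)
        then have "f x \<le> C" by (simp add: C_def)
        then show ?thesis using Cd2 by linarith
      qed
    qed
  qed
  show ?thesis using C1 key by blast
qed


lemma frac_in01: "frac x \<in> {0..<1}" by (simp add: frac_lt_1)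

lemma birk_step:
  assumes fpos: "\<And>x. x \<in> {0..<1} \<Longrightarrow> f x > 0"
  shows "birk f \<alpha> (m + 1) a = birk f \<alpha> m a + f (frac (a + of_int m * \<alpha>))"
proof (cases "m \<ge> 0")
  case True
  then have "nat (m + 1) = Suc (nat m)" by simp
  then show ?thesis using True unfolding birk_def by simp
next
  case False
  define k where "k = nat (- m)"
  have k1: "k \<ge> 1" and mk: "m = - int k" using False by (auto simp: k_def)
  have fr: "frac (a + of_int m * \<alpha>) = frac (a - real k * \<alpha>)" using mk by simp
  show ?thesis
  proof (cases "m + 1 \<ge> 0")
    case True
    then have "m = -1" using False by simp
    then show ?thesis unfolding birk_def by simp
  next
    case False2: False
    have nk: "nat (- (m + 1)) = k - 1" using mk by simp
    have "{1..k} = insert k {1..k-1}" using k1 by auto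
    then have "(\<Sum>i\<in>{1..k}. f (frac (a - real i * \<alpha>))) = f (frac (a - real k * \<alpha>)) + (\<Sum>i\<in>{1..k-1}. f (frac (a - real i * \<alpha>)))"
      using k1 by simp
    then show ?thesis unfolding birk_def using False False2 nk fr by (simp add: k_def[symmetric])
  qed
qed

lemma birk_mono:
  assumes fpos: "\<And>x. x \<in> {0..<1} \<Longrightarrow> f x > 0" and "m < m'"
  shows "birk f \<alpha> m a < birk f \<alpha> m' a"
  using assms(2)
proof (induction m' rule: int_gr_induct)
  case base
  show ?case using birk_step[where f=f and \<alpha>=\<alpha> and m=m and a=a, OF fpos] fpos[OF frac_in01] by simp
next
  case (step i)
  show ?case using birk_step[where f=f and \<alpha>=\<alpha> and m=i and a=a, OF fpos] fpos[OF frac_in01, of "a + real_of_int i * \<alpha>"] step.IH by simp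
qed

lemma flow_N_eq:
  assumes fpos: "\<And>x. x \<in> {0..<1} \<Longrightarrow> f x > 0"
    and h: "birk f \<alpha> n a \<le> b + t" "b + t < birk f \<alpha> (n + 1) a"
  shows "flow_N f \<alpha> (a, b) t = n"
  unfolding flow_N_def fst_conv snd_conv
proof (rule the_equality)
  show "birk f \<alpha> n a \<le> b + t \<and> b + t < birk f \<alpha> (n + 1) a" using h by simp
next
  fix m assume m: "birk f \<alpha> m a \<le> b + t \<and> b + t < birk f \<alpha> (m + 1) a"
  show "m = n"
  proof (rule ccontr)
    assume "m \<noteq> n"
    then consider "m < n" | "n < m" by linarith
    then show False
    proof cases
      case 1
      then have "m + 1 \<le> n" by simp
      then have "birk f \<alpha> (m + 1) a \<le> birk f \<alpha> n a"
        using birk_mono[where f=f and m="m+1" and m'=n and \<alpha>=\<alpha> and a=a, OF fpos] by (cases "m + 1 = n") auto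
      then show False using m h by linarith
    next
      case 2
      then have "n + 1 \<le> m" by simp
      then have "birk f \<alpha> (n + 1) a \<le> birk f \<alpha> m a"
        using birk_mono[where f=f and m="n+1" and m'=m and \<alpha>=\<alpha> and a=a, OF fpos] by (cases "n + 1 = m") auto
      then show False using m h by linarith
    qed
  qed
qed


lemma int_split_real: "(of_int K :: real) = of_int (K mod int q) + real q * of_int (K div int q)"
proof -
  have "K = K mod int q + int q * (K div int q)" by simp
  then have "(of_int K :: real) = of_int (K mod int q + int q * (K div int q))" by (rule arg_cong)
  also have "\<dots> = of_int (K mod int q) + real q * of_int (K div int q)" by (simp only: of_int_add of_int_mult of_int_of_nat_eq)
  finally show ?thesis .
qed

lemma pos_repr:
  fixes a \<alpha> E :: real and p q :: nat and i :: nat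
  assumes q: "q > 0" and E: "E = real q * \<alpha> - real p"
  shows "a + real i * \<alpha> = (of_int ((\<lfloor>real q * a\<rfloor> + int i * int p) mod int q) + (real q * a - of_int \<lfloor>real q * a\<rfloor>) + real i * E) / real q
          + of_int ((\<lfloor>real q * a\<rfloor> + int i * int p) div int q)"
proof -
  define K where "K = \<lfloor>real q * a\<rfloor> + int i * int p"
  have "(of_int K :: real) = of_int (K mod int q) + real q * of_int (K div int q)" by (rule int_split_real)
  moreover have "(of_int K :: real) = of_int \<lfloor>real q * a\<rfloor> + real i * real p" by (simp add: K_def)
  ultimately have eq: "of_int (K mod int q) = of_int \<lfloor>real q * a\<rfloor> + real i * real p - real q * of_int (K div int q)"
    by linarith
  have "(of_int (K mod int q) + (real q * a - of_int \<lfloor>real q * a\<rfloor>) + real i * E) / real q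
        = (real i * real p - real q * of_int (K div int q) + real q * a + real i * E) / real q"
    by (simp add: eq)
  also have "\<dots> = (real q * (a + real i * \<alpha> - of_int (K div int q))) / real q"
    by (simp add: E algebra_simps)
  also have "\<dots> = a + real i * \<alpha> - of_int (K div int q)" using q by simp
  finally show ?thesis by (simp add: K_def)
qed

lemma core_sum:
  fixes f :: "real \<Rightarrow> real" and a \<alpha> E C \<delta> :: real and p q :: nat
  assumes fb: "\<And>x. 0 < x \<Longrightarrow> x < 1 \<Longrightarrow> f x \<le> C / sqrt (dnint x)" and C: "C \<ge> 1"
    and q: "q > 0" and cop: "coprime p q" and E: "E = real q * \<alpha> - real p" and Eb: "\<bar>E\<bar> * real q < 1"
    and \<delta>: "\<delta> > 0" and hU: "\<And>i. i < q \<Longrightarrow> dnint (real i * \<alpha> + a) \<ge> \<delta>"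
  shows "(\<Sum>i<q. f (frac (a + real i * \<alpha>))) \<le> C * (6 / sqrt \<delta> + 4 * real q)"
proof -
  define A where "A = \<lfloor>real q * a\<rfloor>"
  define c where "c = real q * a - of_int A"
  have c: "0 \<le> c" "c < 1" unfolding c_def A_def by linarith+
  define J where "J i = nat ((A + int i * int p) mod int q)" for i
  define g where "g j = 1 / sqrt (max \<delta> ((min (real j) (real q - real j) - 2) / real q))" for j
  have bij: "bij_betw J {..<q} {..<q}" unfolding J_def by (rule perm_bij[OF cop q])
  have Jr: "real (J i) = of_int ((A + int i * int p) mod int q)" for i
    unfolding J_def using q by simp
  have Jlt: "J i < q" for i using bij_betwE[OF bij] q unfolding J_def by (simp add: nat_less_iff)
  have pt: "f (frac (a + real i * \<alpha>)) \<le> C * g (J i)" if i: "i < q" for i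
  proof -
    have rep: "a + real i * \<alpha> = (real (J i) + c + real i * E) / real q + of_int ((A + int i * int p) div int q)"
      using pos_repr[OF q E, of a i] unfolding Jr A_def c_def by simp
    have iE: "\<bar>real i * E\<bar> < 1"
    proof -
      have "\<bar>real i * E\<bar> = real i * \<bar>E\<bar>" by (simp add: abs_mult)
      also have "\<dots> \<le> real q * \<bar>E\<bar>" using i by (intro mult_right_mono) auto
      finally show ?thesis using Eb by (simp add: mult.commute)
    qed
    have d0: "dnint (a + real i * \<alpha>) = dnint ((real (J i) + c + real i * E) / real q)"
      by (subst rep) (rule dnint_shift)
    have "dnint ((real (J i) + c + real i * E) / real q) \<ge> dnint (real (J i) / real q) - \<bar>(c + real i * E) / real q\<bar>"
      using dnint_lip[of "real (J i) / real q" "(real (J i) + c + real i * E) / real q"]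
      by (simp add: add_divide_distrib abs_minus_commute)
    moreover have "\<bar>(c + real i * E) / real q\<bar> \<le> 2 / real q"
    proof -
      have "\<bar>c + real i * E\<bar> \<le> 2" using c iE by linarith
      then show ?thesis using q by (simp add: divide_right_mono)
    qed
    moreover have "dnint (real (J i) / real q) \<ge> min (real (J i) / real q) (1 - real (J i) / real q)"
      using Jlt[of i] q by (intro dnint_01) auto
    moreover have "min (real (J i) / real q) (1 - real (J i) / real q) - 2 / real q
        = (min (real (J i)) (real q - real (J i)) - 2) / real q"
      using q by (simp add: min_def field_simps)
    ultimately have d1: "dnint (a + real i * \<alpha>) \<ge> (min (real (J i)) (real q - real (J i)) - 2) / real q"
      using d0 by linarith
    have d2: "dnint (a + real i * \<alpha>) \<ge> \<delta>" using hU[OF i] by (simp add: add.commute)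
    have dfr: "dnint (frac (a + real i * \<alpha>)) = dnint (a + real i * \<alpha>)"
      using dnint_frac[of "a + real i * \<alpha>" 0] by simp
    have mx: "max \<delta> ((min (real (J i)) (real q - real (J i)) - 2) / real q) \<le> dnint (frac (a + real i * \<alpha>))"
      using d1 d2 dfr by simp
    have fr0: "0 < frac (a + real i * \<alpha>)"
    proof (rule ccontr)
      assume "\<not> 0 < frac (a + real i * \<alpha>)"
      then have "frac (a + real i * \<alpha>) = 0" using frac_ge_0[of "a + real i * \<alpha>"] by linarith
      then have "dnint (frac (a + real i * \<alpha>)) = 0"
        by (metis dnint_def round_0 of_int_0 diff_zero abs_zero)
      then show False using mx \<delta> by linarith
    qed
    have "f (frac (a + real i * \<alpha>)) \<le> C / sqrt (dnint (frac (a + real i * \<alpha>)))"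
      using fb[OF fr0 frac_lt_1] .
    also have "\<dots> = C * (1 / sqrt (dnint (frac (a + real i * \<alpha>))))" by simp
    also have "\<dots> \<le> C * g (J i)" unfolding g_def
      using C \<delta> mx by (intro mult_left_mono inv_sqrt_mono) auto
    finally show ?thesis .
  qed
  have "(\<Sum>i<q. f (frac (a + real i * \<alpha>))) \<le> (\<Sum>i<q. C * g (J i))"
    by (rule sum_mono) (use pt in auto)
  also have "\<dots> = C * (\<Sum>i<q. g (J i))" by (simp add: sum_distrib_left)
  also have "(\<Sum>i<q. g (J i)) = (\<Sum>j<q. g j)"
    using sum.reindex_bij_betw[OF bij, of g] by simp
  also have "(\<Sum>j<q. g j) \<le> 6 / sqrt \<delta> + 4 * real q"
    unfolding g_def by (rule g_sum[OF \<delta> q])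
  finally show ?thesis using C by (simp add: mult_left_mono)
qed


lemma core_hit:
  fixes a \<alpha> E t :: real and p q :: nat
  assumes q: "q > 0" and cop: "coprime p q" and E: "E = real q * \<alpha> - real p" and Eb: "\<bar>E\<bar> * real q < 1"
  shows "\<exists>i<q. dnint (a + real i * \<alpha> - t) \<le> 1 / real q"
proof -
  define A where "A = \<lfloor>real q * a\<rfloor>"
  define c where "c = real q * a - of_int A"
  define J where "J i = nat ((A + int i * int p) mod int q)" for i
  have bij: "bij_betw J {..<q} {..<q}" unfolding J_def by (rule perm_bij[OF cop q])
  define F where "F = \<lfloor>real q * t - c\<rfloor>"
  define R where "R = F + (if E \<ge> 0 then 0 else 1)"
  have F: "of_int F \<le> real q * t - c" "real q * t - c < of_int F + 1" unfolding F_def by linarith+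
  have "nat (R mod int q) \<in> {..<q}" using q by (simp add: nat_less_iff)
  then obtain i where i: "i < q" and Ji: "J i = nat (R mod int q)"
    using bij unfolding bij_betw_def by (metis imageE lessThan_iff)
  have "(A + int i * int p) mod int q = R mod int q"
    using Ji q unfolding J_def by (simp add: nat_eq_iff)
  then have "int q dvd (A + int i * int p) - R" by (simp add: mod_eq_dvd_iff)
  then obtain m where m: "A + int i * int p = R + int q * m" by (metis dvd_def diff_eq_eq add.commute)
  have iE: "\<bar>real i * E\<bar> < 1"
  proof -
    have "\<bar>real i * E\<bar> = real i * \<bar>E\<bar>" by (simp add: abs_mult)
    also have "\<dots> \<le> real q * \<bar>E\<bar>" using i by (intro mult_right_mono) auto
    finally show ?thesis using Eb by (simp add: mult.commute)
  qed
  have sgn: "\<bar>of_int R + c + real i * E - real q * t\<bar> \<le> 1"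
  proof (cases "E \<ge> 0")
    case True
    then have "(of_int R::real) = of_int F" unfolding R_def by simp
    moreover have "real i * E \<ge> 0" using True by simp
    ultimately show ?thesis using F iE by linarith
  next
    case False
    then have "(of_int R::real) = of_int F + 1" unfolding R_def by simp
    moreover have "real i * E \<le> 0" using False by (simp add: mult_nonneg_nonpos)
    ultimately show ?thesis using F iE by linarith
  qed
  have e1: "real q * (a + real i * \<alpha>) = (of_int A + real i * real p) + c + real i * E"
    unfolding c_def E by (simp add: algebra_simps)
  have e2: "of_int A + real i * real p = of_int (A + int i * int p)" by simp
  have e3: "(of_int (A + int i * int p)::real) = of_int R + real q * of_int m" unfolding m by simp
  have "real q * (a + real i * \<alpha>) = of_int R + real q * of_int m + c + real i * E"
    using e1 e2 e3 by linarith
  then have "a + real i * \<alpha> - t = (of_int R + c + real i * E - real q * t) / real q + of_int m"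
    using q by (simp add: field_simps)
  then have "dnint (a + real i * \<alpha> - t) = dnint ((of_int R + c + real i * E - real q * t) / real q)"
    by (simp add: dnint_shift)
  also have "\<dots> \<le> \<bar>(of_int R + c + real i * E - real q * t) / real q\<bar>"
    using dnint_le_x by blast
  also have "\<dots> \<le> 1 / real q" using sgn q by (simp add: divide_right_mono)
  finally show ?thesis using i by blast
qed


lemma final_ineq:
  fixes N :: nat and C :: real
  assumes N3: "N \<ge> 3" and L: "ln (real N) \<ge> 10 * C + 1" and C: "C \<ge> 1"
  shows "C * (6 * sqrt (real N * ln (real N) ^ 3) + 4 * (real N * ln (real N) ^ 2)) < real N * ln (real N) ^ 6"
proof -
  define L where "L = ln (real N)"
  have L1: "L \<ge> 1" using L C unfolding L_def by linarith
  have Npos: "real N \<ge> 1" using N3 by simp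
  have "real N * L ^ 3 \<le> (real N * L ^ 2) ^ 2"
  proof -
    have "real N * L ^ 3 = (real N * L ^ 3) * 1 * 1" by simp
    also have "\<dots> \<le> (real N * L ^ 3) * real N * L"
      using Npos L1 by (intro mult_mono) (auto intro: mult_nonneg_nonneg)
    also have "\<dots> = (real N * L ^ 2) ^ 2" by (simp add: power2_eq_square power3_eq_cube power_numeral_reduce)
    finally show ?thesis .
  qed
  then have "sqrt (real N * L ^ 3) \<le> sqrt ((real N * L ^ 2) ^ 2)" by (rule real_sqrt_le_mono)
  also have "\<dots> = real N * L ^ 2" using Npos L1 by simp
  finally have s: "sqrt (real N * L ^ 3) \<le> real N * L ^ 2" .
  have "C * (6 * sqrt (real N * L ^ 3) + 4 * (real N * L ^ 2)) \<le> C * (10 * (real N * L ^ 2))"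
    using s C by (intro mult_left_mono) auto
  also have "\<dots> = (10 * C) * (real N * L ^ 2)" by simp
  also have "\<dots> < L ^ 4 * (real N * L ^ 2)"
  proof (rule mult_strict_right_mono)
    have "L ^ 4 \<ge> L" using L1 by (metis power_increasing[of 1 4 L] power_one_right one_le_numeral)
    then show "10 * C < L ^ 4" using L unfolding L_def by linarith
    show "0 < real N * L ^ 2" using Npos L1 by simp
  qed
  also have "\<dots> = real N * L ^ 6" by (simp add: power_add[symmetric] algebra_simps numeral_eq_Suc)
  finally show ?thesis unfolding L_def .
qed

theorem lemma4p1:
  fixes f f' f'' :: "real \<Rightarrow> real" and \<eta> \<alpha> M1 M2 M3 M4 :: real
  assumes eta: "0 < \<eta>" "\<eta> < 1/2"
    and f'_deriv: "\<And>x. x \<in> {0<..<1} \<Longrightarrow> (f has_real_derivative f' x) (at x)"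
    and f''_deriv: "\<And>x. x \<in> {0<..<1} \<Longrightarrow> (f' has_real_derivative f'' x) (at x)"
    and f''_cont: "continuous_on {0<..<1} f''"
    and f_pos: "\<And>x. x \<in> {0..<1} \<Longrightarrow> f x > 0"
    and f''_pos: "\<And>x. x \<in> {0<..<1} \<Longrightarrow> f'' x > 0"
    and f_int: "(f has_integral 1) {0..1}"
    and lim1: "((\<lambda>x. f x * x powr (1/2 - \<eta>)) \<longlongrightarrow> M1) (at_right 0)"
    and lim2: "((\<lambda>x. f x * (1 - x) powr (1/2 - \<eta>)) \<longlongrightarrow> M2) (at_left 1)"
    and lim3: "((\<lambda>x. f' x * x powr (1/2 - \<eta> + 1)) \<longlongrightarrow> - M3) (at_right 0)"
    and lim4: "((\<lambda>x. f' x * (1 - x) powr (1/2 - \<eta> + 1)) \<longlongrightarrow> M4) (at_left 1)"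
    and M: "M1 \<in> {0<..<1}" "M2 \<in> {0<..<1}" "M3 \<in> {0<..<1}" "M4 \<in> {0<..<1}"
    and alpha: "0 < \<alpha>" "\<alpha> < 1" "\<alpha> \<notin> \<rat>"
    and qgrowth: "\<forall>\<^sub>F n in sequentially.
        real (cf_q \<alpha> (Suc n)) \<le> real (cf_q \<alpha> n) * (ln (real (cf_q \<alpha> n)))^2"
  shows "\<exists>N0::nat. \<forall>N\<ge>N0. \<forall>z\<in>U_set f \<alpha> N. \<forall>zb\<in>U_set f \<alpha> N.
           \<exists>T0::real. \<bar>T0\<bar> < real N * (ln (real N))^6 \<and>
             dH (spflow f \<alpha> T0 zb) z \<le> 1 / real N"
proof -
  have cont: "continuous_on {0<..<1} f"
    by (rule continuous_at_imp_continuous_on) (use f'_deriv DERIV_isCont in blast)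
  obtain C where C1: "C \<ge> 1" and fb0: "\<And>x. 0 < x \<and> x < 1 \<longrightarrow> f x \<le> C / sqrt (dnint x)"
    using f_bound[OF cont _ lim1 lim2] M eta by force
  have fb: "\<And>x. 0 < x \<Longrightarrow> x < 1 \<Longrightarrow> f x \<le> C / sqrt (dnint x)" using fb0 by blast
  interpret cfl \<alpha> using alpha by unfold_locales auto
  obtain K0 where K0: "\<And>n. n \<ge> K0 \<Longrightarrow> real (q (Suc n)) \<le> real (q n) * (ln (real (q n)))^2"
    using qgrowth unfolding eventually_sequentially by blast
  define N0 where "N0 = max (max 3 (q K0 + 1)) (nat \<lceil>exp (10 * C + 1)\<rceil>)"
  show ?thesis
  proof (intro exI[of _ N0] allI impI ballI)
    fix N z zb assume N: "N \<ge> N0" and z: "z \<in> U_set f \<alpha> N" and zb: "zb \<in> U_set f \<alpha> N"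
    have N3: "N \<ge> 3" and NK: "N > q K0" using N unfolding N0_def by auto
    have "real N \<ge> exp (10 * C + 1)"
    proof -
      have "nat \<lceil>exp (10 * C + 1)\<rceil> \<le> N" using N unfolding N0_def by auto
      then have "real (nat \<lceil>exp (10 * C + 1)\<rceil>) \<le> real N" by linarith
      moreover have "exp (10 * C + 1) \<le> real (nat \<lceil>exp (10 * C + 1)\<rceil>)" by linarith
      ultimately show ?thesis by linarith
    qed
    then have "ln (exp (10 * C + 1)) \<le> ln (real N)"
      using ln_le_cancel_iff[of "exp (10 * C + 1)" "real N"] N3 by simp
    then have LN: "ln (real N) \<ge> 10 * C + 1" by simp
    have Lpos: "ln (real N) \<ge> 1" using LN C1 by linarith
    obtain a b where zb_eq: "zb = (a, b)" by (cases zb)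
    have ab: "0 \<le> a" "a < 1" "0 \<le> b" "b < f a" using zb unfolding zb_eq U_set_def flow_space_def by auto
    have hUzb: "\<And>n::int. real_of_int \<bar>n\<bar> \<le> real N * (ln (real N))^2 \<Longrightarrow>
        dnint (of_int n * \<alpha> + a) \<ge> 1 / (real N * (ln (real N))^3)"
      using zb unfolding zb_eq U_set_def by auto
    define k where "k = (LEAST k. q k \<ge> N)"
    have exk: "q N \<ge> N" by (rule q_ge)
    have qk: "q k \<ge> N" unfolding k_def by (rule LeastI[of _ N]) (rule exk)
    have k0: "k \<noteq> 0"
    proof
      assume "k = 0"
      then have "q k = 1" by simp
      then show False using qk N3 by simp
    qed
    have qk1: "q (k - 1) < N"
    proof -
      have "\<not> q (k - 1) \<ge> N" unfolding k_def by (rule not_less_Least) (use k0 k_def in simp)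
      then show ?thesis by simp
    qed
    have kK: "k - 1 \<ge> K0"
    proof (rule ccontr)
      assume "\<not> k - 1 \<ge> K0"
      then have "k \<le> K0" using k0 by simp
      then have "q k \<le> q K0" using q_mono by (simp add: monoD)
      then show False using qk NK by simp
    qed
    define Q where "Q = q k"
    have Qpos: "Q > 0" using q_pos[of k] unfolding Q_def by simp
    have QN: "real Q \<ge> real N" using qk unfolding Q_def by simp
    have Qub: "real Q \<le> real N * (ln (real N))^2"
    proof -
      have "real Q \<le> real (q (k - 1)) * (ln (real (q (k - 1))))^2"
        using K0[OF kK] k0 unfolding Q_def by simp
      also have "\<dots> \<le> real N * (ln (real N))^2"
      proof (rule mult_mono)
        have q1: "real (q (k - 1)) \<ge> 1" using q_pos[of "k - 1"] by simp
        show "real (q (k - 1)) \<le> real N" using qk1 by simp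
        have "ln (real (q (k - 1))) \<le> ln (real N)" using q1 qk1 by simp
        moreover have "ln (real (q (k - 1))) \<ge> 0" using q1 by simp
        ultimately show "(ln (real (q (k - 1))))^2 \<le> (ln (real N))^2" by (rule power_mono)
        show "0 \<le> real N" by simp
        show "0 \<le> (ln (real (q (k - 1))))^2" by simp
      qed
      finally show ?thesis .
    qed
    define P where "P = p k"
    have cop: "coprime P Q" unfolding P_def Q_def by (rule coprime_pq)
    define E where "E = real Q * \<alpha> - real P"
    have Eb: "\<bar>E\<bar> * real Q < 1"
    proof -
      have "\<bar>E\<bar> < 1 / real (q (Suc k))" using e_bound[of k] unfolding E_def e_def P_def Q_def .
      also have "\<dots> \<le> 1 / real Q" unfolding Q_def using q_Suc_mono[of k] q_pos[of k]
        by (intro divide_left_mono) auto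
      finally show ?thesis using Qpos by (simp add: less_divide_eq)
    qed
    define \<delta> where "\<delta> = 1 / (real N * (ln (real N))^3)"
    have \<delta>pos: "\<delta> > 0" unfolding \<delta>_def using N3 Lpos by simp
    have hU: "\<And>i. i < Q \<Longrightarrow> dnint (real i * \<alpha> + a) \<ge> \<delta>"
    proof -
      fix i assume "i < Q"
      then have "real_of_int \<bar>int i\<bar> \<le> real N * (ln (real N))^2" using Qub by simp
      then have "dnint (of_int (int i) * \<alpha> + a) \<ge> 1 / (real N * (ln (real N))^3)" by (rule hUzb)
      then show "dnint (real i * \<alpha> + a) \<ge> \<delta>" unfolding \<delta>_def by simp
    qed
    define S where "S = (\<Sum>i<Q. f (frac (a + real i * \<alpha>)))"
    have Sb: "S \<le> C * (6 / sqrt \<delta> + 4 * real Q)"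
      unfolding S_def by (rule core_sum[OF fb C1 Qpos cop E_def Eb \<delta>pos hU])
    have fpos': "\<And>x. x \<in> {0..<1} \<Longrightarrow> f x > 0" using f_pos by blast
    have terms: "\<And>i. f (frac (a + real i * \<alpha>)) > 0" using fpos'[OF frac_in01] by blast
    obtain i where i: "i < Q" and hit: "dnint (a + real i * \<alpha> - fst z) \<le> 1 / real Q"
      using core_hit[OF Qpos cop E_def Eb, of a "fst z"] by blast
    define T0 where "T0 = birk f \<alpha> (int i) a - b"
    have birk_i: "birk f \<alpha> (int i) a = (\<Sum>j<i. f (frac (a + real j * \<alpha>)))"
      unfolding birk_def by simp
    have fN: "flow_N f \<alpha> (a, b) T0 = int i"
    proof (rule flow_N_eq[OF fpos'])
      show "birk f \<alpha> (int i) a \<le> b + T0" unfolding T0_def by simp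
      have "birk f \<alpha> (int i + 1) a = birk f \<alpha> (int i) a + f (frac (a + of_int (int i) * \<alpha>))"
        by (rule birk_step[where f=f, OF fpos'])
      then show "b + T0 < birk f \<alpha> (int i + 1) a" unfolding T0_def using terms[of i] by simp
    qed
    have dH: "dH (spflow f \<alpha> T0 zb) z \<le> 1 / real N"
    proof -
      have "dH (spflow f \<alpha> T0 zb) z = dnint (frac (a + real i * \<alpha>) - fst z)"
        unfolding zb_eq spflow_def dH_def using fN by (simp add: Let_def)
      also have "\<dots> = dnint (a + real i * \<alpha> - fst z)" by (rule dnint_frac)
      also have "\<dots> \<le> 1 / real Q" by (rule hit)
      also have "\<dots> \<le> 1 / real N" using QN N3 by (intro divide_left_mono) auto
      finally show ?thesis .
    qed
    have birk_le: "birk f \<alpha> (int i) a \<le> S"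
      unfolding birk_i S_def using i terms by (intro sum_mono2) (auto intro: less_imp_le)
    have birk_ge: "birk f \<alpha> (int i) a \<ge> 0"
      unfolding birk_i using terms by (intro sum_nonneg) (auto intro: less_imp_le)
    have fa: "f a \<le> S"
    proof -
      have "f a = f (frac (a + real 0 * \<alpha>))" using ab by (simp add: frac_eq)
      also have "\<dots> \<le> S" unfolding S_def
        using Qpos terms by (intro member_le_sum) (auto intro: less_imp_le)
      finally show ?thesis .
    qed
    have T0b: "\<bar>T0\<bar> \<le> S" unfolding T0_def using birk_le birk_ge fa ab by linarith
    have "S \<le> C * (6 * sqrt (real N * ln (real N) ^ 3) + 4 * (real N * ln (real N) ^ 2))"
    proof -
      have "1 / sqrt \<delta> = sqrt (real N * ln (real N) ^ 3)" unfolding \<delta>_def by (simp add: real_sqrt_divide)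
      then have "6 / sqrt \<delta> + 4 * real Q \<le> 6 * sqrt (real N * ln (real N) ^ 3) + 4 * (real N * ln (real N) ^ 2)"
        using Qub by (simp add: divide_inverse)
      then show ?thesis using Sb C1 by (smt (verit) mult_left_mono)
    qed
    also have "\<dots> < real N * ln (real N) ^ 6" by (rule final_ineq[OF N3 LN C1])
    finally show "\<exists>T0. \<bar>T0\<bar> < real N * ln (real N) ^ 6 \<and> dH (spflow f \<alpha> T0 zb) z \<le> 1 / real N"
      using T0b dH by (intro exI[of _ T0]) auto
  qed
qed


end
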